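(* Let $(e_n)$ be a uniformly quasi-greedy basic sequence in a Banach lattice $X$, with span $E$, quasi-greedy constant $C_{qg}$ and uniform quasi-greedy constant $C^\vee_{qg}$. Then for every $x\in E$ and every ordered set $A=\{n_1,\dots,n_m\}\subseteq\mathrm{supp}(x)$, $$\|P^\vee_A(x)\|\le 8C_{qg}^2C^\vee_{qg}\,\frac{\max\{|e_n^*(x)|:n\in A\}}{\min\{|e_n^*(x)|:n\in A\}}\,\|x\|.$$
   Context: $(e_n)$ is a semi-normalized basic sequence with biorthogonal functionals $e_n^*$, $\mathrm{supp}(x)=\{n:e_n^*(x)\ne0\}$. For $x\in E$, the natural greedy ordering $\rho$ lists indices by non-increasing $|e_n^*(x)|$ (ties broken by increasing index, range containing the support); $\mathcal{G}_m(x)=\sum_{n=1}^m e^*_{\rho(n)}(x)e_{\rho(n)}$, $\mathcal{G}^\vee_m(x)=\bigvee_{n\le m}|\mathcal{G}_n(x)|$. $C_{qg}=\sup_m\sup_{\|x\|=1}\|\mathcal{G}_m(x)\|$ and $C^\vee_{qg}=\sup_m\sup_{\|x\|=1}\|\mathcal{G}^\vee_m(x)\|$; the sequence is uniformly quasi-greedy if $C^\vee_{qg}<\infty$ (which implies $C_{qg}<\infty$). For an ordered finite set $A=\{n_1,\dots,n_m\}\subseteq\mathbb{N}$ (the order being the listed one), $P^\vee_A(x)=\bigvee_{i=1}^m\big|\sum_{k=1}^i e^*_{n_k}(x)e_{n_k}\big|$. *)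

theory Defs
  imports "HOL-Analysis.Analysis"
begin

definition labs :: "'a::{uminus,sup} \<Rightarrow> 'a" where
  "labs x = sup x (- x)"

class banach_lattice = banach + ordered_real_vector + lattice +
  assumes lattice_norm: "sup x (- x) \<le> sup y (- y) \<Longrightarrow> norm x \<le> norm y"

definition cspan :: "(nat \<Rightarrow> 'a::real_normed_vector) \<Rightarrow> 'a set" where
  "cspan e = closure (span (range e))"

definition semi_normalized :: "(nat \<Rightarrow> 'a::real_normed_vector) \<Rightarrow> bool" where
  "semi_normalized e \<longleftrightarrow> (\<exists>c C. 0 < c \<and> (\<forall>n. c \<le> norm (e n) \<and> norm (e n) \<le> C))"

definition basic_sequence :: "(nat \<Rightarrow> 'a::real_normed_vector) \<Rightarrow> bool" where
  "basic_sequence e \<longleftrightarrow>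
     (\<forall>x\<in>cspan e. \<exists>!a. (\<lambda>N. \<Sum>n<N. a n *\<^sub>R e n) \<longlonglongrightarrow> x)"

definition coef :: "(nat \<Rightarrow> 'a::real_normed_vector) \<Rightarrow> nat \<Rightarrow> 'a \<Rightarrow> real" where
  "coef e n x = (THE a. (\<lambda>N. \<Sum>k<N. a k *\<^sub>R e k) \<longlonglongrightarrow> x) n"

definition supp :: "(nat \<Rightarrow> 'a::real_normed_vector) \<Rightarrow> 'a \<Rightarrow> nat set" where
  "supp e x = {n. coef e n x \<noteq> 0}"

fun greedy_list :: "(nat \<Rightarrow> real) \<Rightarrow> nat \<Rightarrow> nat list" where
  "greedy_list c 0 = []"
| "greedy_list c (Suc m) = greedy_list c m @
     [LEAST n. n \<notin> set (greedy_list c m) \<and>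
        (\<forall>k. k \<notin> set (greedy_list c m) \<longrightarrow> \<bar>c k\<bar> \<le> \<bar>c n\<bar>)]"

definition greedy_ord :: "(nat \<Rightarrow> 'a::real_normed_vector) \<Rightarrow> 'a \<Rightarrow> nat \<Rightarrow> nat" where
  "greedy_ord e x n = greedy_list (\<lambda>k. coef e k x) (Suc n) ! n"

definition greedy_sum :: "(nat \<Rightarrow> 'a::real_normed_vector) \<Rightarrow> nat \<Rightarrow> 'a \<Rightarrow> 'a" where
  "greedy_sum e m x = (\<Sum>n<m. coef e (greedy_ord e x n) x *\<^sub>R e (greedy_ord e x n))"

definition greedy_max :: "(nat \<Rightarrow> 'a::banach_lattice) \<Rightarrow> nat \<Rightarrow> 'a \<Rightarrow> 'a" where
  "greedy_max e m x = Sup_fin ((\<lambda>n. labs (greedy_sum e n x)) ` {1..m})"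

definition C_qg :: "(nat \<Rightarrow> 'a::real_normed_vector) \<Rightarrow> real" where
  "C_qg e = Sup {norm (greedy_sum e m x) | m x. 1 \<le> m \<and> x \<in> cspan e \<and> norm x = 1}"

definition C_uqg :: "(nat \<Rightarrow> 'a::banach_lattice) \<Rightarrow> real" where
  "C_uqg e = Sup {norm (greedy_max e m x) | m x. 1 \<le> m \<and> x \<in> cspan e \<and> norm x = 1}"

definition uniformly_quasi_greedy :: "(nat \<Rightarrow> 'a::banach_lattice) \<Rightarrow> bool" where
  "uniformly_quasi_greedy e \<longleftrightarrow>
     bdd_above {norm (greedy_max e m x) | m x. 1 \<le> m \<and> x \<in> cspan e \<and> norm x = 1}"

text \<open>P^\<or>_A for an ordered finite set A = [n_1,...,n_m].\<close>
definition P_vee :: "(nat \<Rightarrow> 'a::banach_lattice) \<Rightarrow> nat list \<Rightarrow> 'a \<Rightarrow> 'a" where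
  "P_vee e ns x = Sup_fin ((\<lambda>i. labs (\<Sum>k<i. coef e (ns ! k) x *\<^sub>R e (ns ! k))) ` {1..length ns})"

end

theory Submission
  imports Defs
begin

section \<open>Lattice facts\<close>

lemma labs_nonneg: "0 \<le> labs (v::'a::banach_lattice)"
proof -
  let ?s = "sup v (- v)"
  have "v \<le> ?s" "- v \<le> ?s" by auto
  hence "v + - v \<le> ?s + ?s" by (rule add_mono)
  hence "0 \<le> (2::real) *\<^sub>R ?s" by (simp add: scaleR_2)
  hence "(1/2::real) *\<^sub>R 0 \<le> (1/2::real) *\<^sub>R ((2::real) *\<^sub>R ?s)"
    by (intro scaleR_left_mono) auto
  thus ?thesis by (simp add: labs_def)
qed

lemma labs_of_nonneg: "0 \<le> (p::'a::banach_lattice) \<Longrightarrow> labs p = p"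
proof -
  assume "0 \<le> p"
  hence "- p \<le> p" using order_trans[of "-p" 0 p] by (simp add: neg_le_0_iff_le)
  thus ?thesis by (simp add: labs_def sup_absorb1)
qed

lemma norm_le_labs:
  assumes "labs (v::'a::banach_lattice) \<le> q" shows "norm v \<le> norm q"
proof -
  have "0 \<le> q" using labs_nonneg[of v] assms by (rule order_trans)
  hence "labs q = q" by (rule labs_of_nonneg)
  thus ?thesis using assms lattice_norm[of v q] by (simp add: labs_def)
qed

lemma norm_mono_lat:
  assumes "0 \<le> (p::'a::banach_lattice)" "p \<le> q" shows "norm p \<le> norm q"
  using assms norm_le_labs labs_of_nonneg by metis

lemma labs_le_iff: "labs (v::'a::banach_lattice) \<le> q \<longleftrightarrow> v \<le> q \<and> - v \<le> q"
  by (simp add: labs_def)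

lemma labs_ge: "v \<le> labs (v::'a::banach_lattice)" "- v \<le> labs v"
  by (auto simp: labs_def)

lemma labs_add: "labs ((a::'a::banach_lattice) + b) \<le> labs a + labs b"
  unfolding labs_le_iff
  using add_mono[OF labs_ge(1)[of a] labs_ge(1)[of b]] add_mono[OF labs_ge(2)[of a] labs_ge(2)[of b]]
  by (simp_all add: algebra_simps)

lemma labs_minus: "labs (- (v::'a::banach_lattice)) = labs v"
  by (simp add: labs_def sup_commute)

lemma labs_scale_nonneg: "0 \<le> r \<Longrightarrow> labs (r *\<^sub>R (v::'a::banach_lattice)) \<le> r *\<^sub>R labs v"
  unfolding labs_le_iff
  using scaleR_left_mono[OF labs_ge(1)[of v], of r] scaleR_left_mono[OF labs_ge(2)[of v], of r]
  by auto

lemma labs_scale: "labs (r *\<^sub>R (v::'a::banach_lattice)) \<le> \<bar>r\<bar> *\<^sub>R labs v"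
proof (cases "0 \<le> r")
  case True thus ?thesis using labs_scale_nonneg by auto
next
  case False
  have "labs (r *\<^sub>R v) = labs ((- r) *\<^sub>R (- v))" by simp
  also have "\<dots> \<le> (- r) *\<^sub>R labs (- v)" using False by (intro labs_scale_nonneg) auto
  finally show ?thesis using False by (simp add: labs_minus)
qed

lemma labs_sum: "finite F \<Longrightarrow> labs (\<Sum>n\<in>F. (f n::'a::banach_lattice)) \<le> (\<Sum>n\<in>F. labs (f n))"
proof (induction F rule: finite_induct)
  case empty thus ?case by (simp add: labs_def)
next
  case (insert a F)
  thus ?case using labs_add[of "f a" "sum f F"] add_left_mono[OF insert(3), of "labs (f a)"]
    by (simp add: order_trans)
qed

lemma sum_nonneg_lat: "(\<And>n. n \<in> F \<Longrightarrow> 0 \<le> (f n::'a::banach_lattice)) \<Longrightarrow> 0 \<le> sum f F"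
  by (induction F rule: infinite_finite_induct) (auto intro: add_nonneg_nonneg)

lemma sum_mono_subset_lat:
  assumes "finite G" "F \<subseteq> G" "\<And>n. n \<in> G \<Longrightarrow> 0 \<le> (f n::'a::banach_lattice)"
  shows "sum f F \<le> sum f G"
proof -
  have "sum f G = sum f F + sum f (G - F)" using assms
    by (metis add.commute sum.subset_diff)
  moreover have "0 \<le> sum f (G - F)" using assms by (intro sum_nonneg_lat) auto
  ultimately show ?thesis by simp
qed

section \<open>Coefficients\<close>

lemma span_sub_cspan: "span (range e) \<subseteq> cspan e"
  unfolding cspan_def by (rule closure_subset)

lemma cspan_scale: assumes "y \<in> cspan e" shows "c *\<^sub>R y \<in> cspan e"
proof -
  have "c *\<^sub>R y \<in> (*\<^sub>R) c ` closure (span (range e))" using assms by (auto simp: cspan_def)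
  also have "\<dots> = closure ((*\<^sub>R) c ` span (range e))" by (rule closure_scaleR)
  also have "\<dots> \<subseteq> closure (span (range e))"
    by (intro closure_mono) (auto intro: span_mul)
  finally show ?thesis by (simp add: cspan_def)
qed

lemma coef_conv:
  assumes "basic_sequence e" "y \<in> cspan e"
  shows "(\<lambda>N. \<Sum>k<N. coef e k y *\<^sub>R e k) \<longlonglongrightarrow> y"
proof -
  have ex: "\<exists>!a. (\<lambda>N. \<Sum>n<N. a n *\<^sub>R e n) \<longlonglongrightarrow> y" using assms by (auto simp: basic_sequence_def)
  have "(\<lambda>N. \<Sum>n<N. (THE a. (\<lambda>N. \<Sum>k<N. a k *\<^sub>R e k) \<longlonglongrightarrow> y) n *\<^sub>R e n) \<longlonglongrightarrow> y"
    using theI'[OF ex] .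
  thus ?thesis by (simp add: coef_def)
qed

lemma coef_unique:
  assumes "basic_sequence e" "y \<in> cspan e" "(\<lambda>N. \<Sum>k<N. a k *\<^sub>R e k) \<longlonglongrightarrow> y"
  shows "coef e n y = a n"
proof -
  have ex: "\<exists>!a. (\<lambda>N. \<Sum>n<N. a n *\<^sub>R e n) \<longlonglongrightarrow> y" using assms by (auto simp: basic_sequence_def)
  have "(THE a. (\<lambda>N. \<Sum>k<N. a k *\<^sub>R e k) \<longlonglongrightarrow> y) = a"
    using the1_equality[OF ex] assms(3) by blast
  thus ?thesis by (simp add: coef_def)
qed

lemma coef_scale:
  assumes "basic_sequence e" "y \<in> cspan e"
  shows "coef e n (c *\<^sub>R y) = c * coef e n y"
proof -
  have "(\<lambda>N. c *\<^sub>R (\<Sum>k<N. coef e k y *\<^sub>R e k)) \<longlonglongrightarrow> c *\<^sub>R y"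
    by (intro tendsto_scaleR tendsto_const coef_conv assms)
  hence "(\<lambda>N. \<Sum>k<N. (c * coef e k y) *\<^sub>R e k) \<longlonglongrightarrow> c *\<^sub>R y"
    by (simp add: scaleR_sum_right)
  thus ?thesis by (intro coef_unique assms cspan_scale)
qed

lemma coef_fin:
  assumes "basic_sequence e" "finite F"
  shows "coef e n (\<Sum>k\<in>F. c k *\<^sub>R e k) = (if n \<in> F then c n else 0)"
proof -
  let ?y = "\<Sum>k\<in>F. c k *\<^sub>R e k"
  let ?a = "\<lambda>k. if k \<in> F then c k else 0"
  have "?y \<in> span (range e)" by (intro span_sum span_mul) (auto intro: span_base)
  hence ysp: "?y \<in> cspan e" using span_sub_cspan by blast
  obtain M where M: "\<forall>k\<in>F. k < M" using assms(2) finite_nat_bounded by (metis lessThan_iff subsetD)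
  have "\<forall>N\<ge>M. (\<Sum>k<N. ?a k *\<^sub>R e k) = ?y"
  proof (intro allI impI)
    fix N assume "M \<le> N"
    hence FN: "F \<subseteq> {..<N}" using M by auto
    have "(\<Sum>k<N. ?a k *\<^sub>R e k) = (\<Sum>k\<in>F. ?a k *\<^sub>R e k)"
      using FN by (intro sum.mono_neutral_right) auto
    also have "\<dots> = ?y" by (intro sum.cong) auto
    finally show "(\<Sum>k<N. ?a k *\<^sub>R e k) = ?y" .
  qed
  hence "(\<lambda>N. \<Sum>k<N. ?a k *\<^sub>R e k) \<longlonglongrightarrow> ?y"
    by (intro tendsto_eventually) (auto simp: eventually_sequentially)
  thus ?thesis using coef_unique[OF assms(1) ysp] by auto
qed

lemma coef_zero: "basic_sequence e \<Longrightarrow> coef e n 0 = 0"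
  using coef_fin[of e "{}" n] by simp

lemma coef_tendsto_zero:
  assumes "basic_sequence e" "semi_normalized e" "y \<in> cspan e"
  shows "(\<lambda>n. coef e n y) \<longlonglongrightarrow> 0"
proof -
  obtain c C where c: "0 < c" "\<forall>n. c \<le> norm (e n)" using assms(2) by (auto simp: semi_normalized_def)
  let ?S = "\<lambda>N. \<Sum>k<N. coef e k y *\<^sub>R e k"
  have S: "?S \<longlonglongrightarrow> y" by (rule coef_conv[OF assms(1,3)])
  have "(\<lambda>N. ?S (Suc N) - ?S N) \<longlonglongrightarrow> y - y"
    by (intro tendsto_diff S) (rule LIMSEQ_Suc[OF S])
  hence T: "(\<lambda>N. coef e N y *\<^sub>R e N) \<longlonglongrightarrow> 0" by simp
  hence T2: "(\<lambda>N. norm (coef e N y *\<^sub>R e N) / c) \<longlonglongrightarrow> 0"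
    using tendsto_divide_zero tendsto_norm_zero by blast
  have "\<forall>N. norm (coef e N y) \<le> norm (coef e N y *\<^sub>R e N) / c"
  proof
    fix N
    have "\<bar>coef e N y\<bar> * c \<le> \<bar>coef e N y\<bar> * norm (e N)" using c by (intro mult_left_mono) auto
    thus "norm (coef e N y) \<le> norm (coef e N y *\<^sub>R e N) / c" using c by (simp add: field_simps)
  qed
  thus ?thesis by (intro Lim_null_comparison[OF _ T2]) auto
qed

lemma coef_big_finite:
  assumes "basic_sequence e" "semi_normalized e" "y \<in> cspan e" "0 < a"
  shows "finite {n. a \<le> \<bar>coef e n y\<bar>}"
proof -
  have "eventually (\<lambda>n. dist (coef e n y) 0 < a) sequentially"
    using coef_tendsto_zero[OF assms(1-3)] assms(4) tendstoD by blast
  then obtain N where N: "\<forall>n\<ge>N. \<bar>coef e n y\<bar> < a" by (auto simp: eventually_sequentially)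
  have "{n. a \<le> \<bar>coef e n y\<bar>} \<subseteq> {..<N}" using N by (auto simp: not_less[symmetric])
  thus ?thesis using finite_subset by blast
qed

section \<open>Greedy lists\<close>

lemma length_greedy_list[simp]: "length (greedy_list c i) = i"
  by (induction i) auto

lemma greedy_list_nth: "j < i \<Longrightarrow> greedy_list c i ! j = greedy_list c (Suc j) ! j"
proof (induction i)
  case 0 thus ?case by simp
next
  case (Suc i)
  show ?case
  proof (cases "j < i")
    case True thus ?thesis using Suc by (simp add: nth_append)
  next
    case False hence "j = i" using Suc by simp
    thus ?thesis by simp
  qed
qed

lemma greedy_list_scale: "0 < t \<Longrightarrow> greedy_list (\<lambda>k. t * c k) i = greedy_list c i"
proof (induction i)
  case 0 thus ?case by simp
next
  case (Suc i)
  have eq: "\<And>k n. (\<bar>t * c k\<bar> \<le> \<bar>t * c n\<bar>) = (\<bar>c k\<bar> \<le> \<bar>c n\<bar>)"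
    using Suc.prems by (simp add: abs_mult)
  show ?case using Suc by (simp add: eq)
qed

lemma greedy_list_S:
  assumes "finite S" "\<forall>n\<in>S. \<forall>k. k \<notin> S \<longrightarrow> \<bar>c k\<bar> < \<bar>c n\<bar>" "i \<le> card S"
  shows "set (greedy_list c i) \<subseteq> S \<and> distinct (greedy_list c i) \<and>
    (\<forall>j<i. \<forall>k. k \<notin> set (take j (greedy_list c i)) \<longrightarrow> \<bar>c k\<bar> \<le> \<bar>c (greedy_list c i ! j)\<bar>)"
  using assms(3)
proof (induction i)
  case 0 thus ?case by simp
next
  case (Suc i)
  let ?l = "greedy_list c i"
  have IH: "set ?l \<subseteq> S" "distinct ?l"
    "\<forall>j<i. \<forall>k. k \<notin> set (take j ?l) \<longrightarrow> \<bar>c k\<bar> \<le> \<bar>c (?l ! j)\<bar>"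
    using Suc by auto
  have "card (set ?l) = i" using IH(2) distinct_card by fastforce
  hence "set ?l \<noteq> S" using Suc.prems by auto
  hence ne: "S - set ?l \<noteq> {}" using IH(1) by auto
  have fin: "finite (S - set ?l)" using assms(1) by auto
  obtain n0 where n0: "n0 \<in> S - set ?l" "\<forall>k\<in>S - set ?l. \<bar>c k\<bar> \<le> \<bar>c n0\<bar>"
  proof -
    let ?M = "Max ((\<lambda>k. \<bar>c k\<bar>) ` (S - set ?l))"
    have "?M \<in> (\<lambda>k. \<bar>c k\<bar>) ` (S - set ?l)" using ne fin by (intro Max_in) auto
    then obtain n0 where "n0 \<in> S - set ?l" "\<bar>c n0\<bar> = ?M" by auto
    moreover have "\<forall>k\<in>S - set ?l. \<bar>c k\<bar> \<le> ?M" using fin by auto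
    ultimately show ?thesis using that by auto
  qed
  let ?P = "\<lambda>n. n \<notin> set ?l \<and> (\<forall>k. k \<notin> set ?l \<longrightarrow> \<bar>c k\<bar> \<le> \<bar>c n\<bar>)"
  have Pn0: "?P n0"
  proof -
    have "\<forall>k. k \<notin> set ?l \<longrightarrow> \<bar>c k\<bar> \<le> \<bar>c n0\<bar>"
    proof (intro allI impI)
      fix k assume "k \<notin> set ?l"
      show "\<bar>c k\<bar> \<le> \<bar>c n0\<bar>"
      proof (cases "k \<in> S")
        case True thus ?thesis using n0 \<open>k \<notin> set ?l\<close> by auto
      next
        case False thus ?thesis using assms(2) n0 by force
      qed
    qed
    thus ?thesis using n0 by auto
  qed
  define m where "m = (LEAST n. ?P n)"
  have Pm: "?P m" unfolding m_def by (rule LeastI[of ?P n0, OF Pn0])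
  have mS: "m \<in> S"
  proof (rule ccontr)
    assume "m \<notin> S"
    hence "\<bar>c m\<bar> < \<bar>c n0\<bar>" using assms(2) n0 by auto
    moreover have "\<bar>c n0\<bar> \<le> \<bar>c m\<bar>" using Pm n0 by auto
    ultimately show False by simp
  qed
  have gl: "greedy_list c (Suc i) = ?l @ [m]" by (simp add: m_def)
  show ?case unfolding gl
  proof (intro conjI)
    show "set (?l @ [m]) \<subseteq> S" using IH mS by auto
    show "distinct (?l @ [m])" using IH Pm by auto
    show "\<forall>j<Suc i. \<forall>k. k \<notin> set (take j (?l @ [m])) \<longrightarrow> \<bar>c k\<bar> \<le> \<bar>c ((?l @ [m]) ! j)\<bar>"
    proof (intro allI impI)
      fix j k assume j: "j < Suc i" and k: "k \<notin> set (take j (?l @ [m]))"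
      show "\<bar>c k\<bar> \<le> \<bar>c ((?l @ [m]) ! j)\<bar>"
      proof (cases "j < i")
        case True thus ?thesis using IH(3) k by (simp add: nth_append)
      next
        case False hence "j = i" using j by simp
        thus ?thesis using Pm k by (simp add: nth_append)
      qed
    qed
  qed
qed

lemma greedy_list_S_set:
  assumes "finite S" "\<forall>n\<in>S. \<forall>k. k \<notin> S \<longrightarrow> \<bar>c k\<bar> < \<bar>c n\<bar>"
  shows "set (greedy_list c (card S)) = S" "distinct (greedy_list c (card S))"
proof -
  have h: "set (greedy_list c (card S)) \<subseteq> S" "distinct (greedy_list c (card S))"
    using greedy_list_S[OF assms, of "card S"] by auto
  thus "distinct (greedy_list c (card S))" by simp
  have "card (set (greedy_list c (card S))) = card S" using h(2) distinct_card by fastforce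
  thus "set (greedy_list c (card S)) = S" using h(1) assms(1) card_subset_eq by blast
qed

lemma greedy_ord_nth: "j < i \<Longrightarrow> greedy_ord e y j = greedy_list (\<lambda>k. coef e k y) i ! j"
  by (simp add: greedy_ord_def greedy_list_nth)

lemma greedy_sum_list:
  "greedy_sum e J y = (\<Sum>j<J. coef e (greedy_list (\<lambda>k. coef e k y) J ! j) y *\<^sub>R e (greedy_list (\<lambda>k. coef e k y) J ! j))"
  unfolding greedy_sum_def by (intro sum.cong) (auto simp: greedy_ord_nth)

lemma greedy_sum_set:
  assumes "distinct (greedy_list (\<lambda>k. coef e k y) J)"
  shows "greedy_sum e J y = (\<Sum>n\<in>set (greedy_list (\<lambda>k. coef e k y) J). coef e n y *\<^sub>R e n)"
proof -
  let ?l = "greedy_list (\<lambda>k. coef e k y) J"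
  let ?f = "\<lambda>n. coef e n y *\<^sub>R e n"
  have "greedy_sum e J y = (\<Sum>j<length ?l. ?f (?l ! j))" by (simp add: greedy_sum_list)
  also have "\<dots> = sum_list (map ?f ?l)" by (simp add: sum_list_sum_nth atLeast0LessThan)
  also have "\<dots> = sum ?f (set ?l)" using assms by (simp add: sum_list_distinct_conv_sum_set)
  finally show ?thesis .
qed

lemma greedy_sum_scale:
  assumes "basic_sequence e" "y \<in> cspan e" "0 < t"
  shows "greedy_sum e m (t *\<^sub>R y) = t *\<^sub>R greedy_sum e m y"
proof -
  have c: "(\<lambda>k. coef e k (t *\<^sub>R y)) = (\<lambda>k. t * coef e k y)"
    using coef_scale[OF assms(1,2)] by auto
  have "greedy_ord e (t *\<^sub>R y) = greedy_ord e y"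
  proof (rule ext)
    fix n
    have "greedy_list (\<lambda>k. coef e k (t *\<^sub>R y)) = greedy_list (\<lambda>k. coef e k y)"
      using greedy_list_scale[OF assms(3), of "\<lambda>k. coef e k y"] by (auto simp: c)
    thus "greedy_ord e (t *\<^sub>R y) n = greedy_ord e y n" by (simp add: greedy_ord_def)
  qed
  thus ?thesis by (simp add: greedy_sum_def coef_scale[OF assms(1,2)] scaleR_sum_right)
qed

lemma greedy_max_ge:
  "1 \<le> j \<Longrightarrow> j \<le> m \<Longrightarrow> labs (greedy_sum e j y) \<le> greedy_max e m y"
  unfolding greedy_max_def by (intro Sup_fin.coboundedI) auto

lemma greedy_max_nonneg: "1 \<le> m \<Longrightarrow> 0 \<le> greedy_max e m y"
  using greedy_max_ge[of 1 m e y] labs_nonneg order_trans by blast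

lemma norm_gs_le_gm: "1 \<le> m \<Longrightarrow> norm (greedy_sum e m y) \<le> norm (greedy_max e m y)"
  by (intro norm_le_labs greedy_max_ge) auto

lemma qg_bdd:
  assumes "uniformly_quasi_greedy e"
  shows "bdd_above {norm (greedy_sum e m x) | m x. 1 \<le> m \<and> x \<in> cspan e \<and> norm x = 1}"
proof -
  obtain B where B: "\<forall>v\<in>{norm (greedy_max e m x) | m x. 1 \<le> m \<and> x \<in> cspan e \<and> norm x = 1}. v \<le> B"
    using assms by (auto simp: uniformly_quasi_greedy_def bdd_above_def)
  show ?thesis unfolding bdd_above_def
  proof (intro exI[of _ B] ballI)
    fix v assume "v \<in> {norm (greedy_sum e m x) | m x. 1 \<le> m \<and> x \<in> cspan e \<and> norm x = 1}"
    then obtain m x where mx: "v = norm (greedy_sum e m x)" "1 \<le> m" "x \<in> cspan e" "norm x = 1" by auto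
    have "norm (greedy_max e m x) \<le> B" using B mx by blast
    thus "v \<le> B" using norm_gs_le_gm[OF mx(2), of e x] mx(1) by simp
  qed
qed

lemma Cuqg_bound:
  assumes "uniformly_quasi_greedy e" "y \<in> cspan e" "norm y = 1" "1 \<le> m"
  shows "norm (greedy_max e m y) \<le> C_uqg e"
  unfolding C_uqg_def using assms
  by (intro cSup_upper) (auto simp: uniformly_quasi_greedy_def)

lemma Cqg_bound1:
  assumes "uniformly_quasi_greedy e" "y \<in> cspan e" "norm y = 1" "1 \<le> m"
  shows "norm (greedy_sum e m y) \<le> C_qg e"
  unfolding C_qg_def using assms qg_bdd[OF assms(1)]
  by (intro cSup_upper) auto

lemma greedy_sum_zero: "basic_sequence e \<Longrightarrow> greedy_sum e m 0 = 0"
  by (simp add: greedy_sum_def coef_zero)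

lemma Cqg_bound:
  assumes "basic_sequence e" "uniformly_quasi_greedy e" "y \<in> cspan e" "1 \<le> m"
  shows "norm (greedy_sum e m y) \<le> C_qg e * norm y"
proof (cases "y = 0")
  case True thus ?thesis using greedy_sum_zero[OF assms(1)] by simp
next
  case False
  let ?t = "norm y"
  have t: "0 < ?t" using False by simp
  let ?z = "(1 / ?t) *\<^sub>R y"
  have z: "?z \<in> cspan e" "norm ?z = 1" using cspan_scale[OF assms(3)] t by auto
  have "greedy_sum e m y = ?t *\<^sub>R greedy_sum e m ?z"
    using greedy_sum_scale[OF assms(1,3), of "1/?t" m] t by simp
  hence "norm (greedy_sum e m y) = ?t * norm (greedy_sum e m ?z)" by simp
  also have "\<dots> \<le> ?t * C_qg e" using Cqg_bound1[OF assms(2) z assms(4)] t by (intro mult_left_mono) auto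
  finally show ?thesis by (simp add: mult.commute)
qed

lemma exists_unit:
  assumes "semi_normalized e" obtains y where "y \<in> cspan e" "norm y = 1"
proof -
  obtain c C where c: "0 < c" "\<forall>n. c \<le> norm (e n)" using assms by (auto simp: semi_normalized_def)
  hence "e 0 \<noteq> 0" by (metis norm_zero not_le)
  moreover have "e 0 \<in> cspan e" using span_sub_cspan span_base by blast
  ultimately show ?thesis using that[of "(1 / norm (e 0)) *\<^sub>R e 0"] cspan_scale by auto
qed

lemma Cqg_nonneg:
  assumes "semi_normalized e" "uniformly_quasi_greedy e" shows "0 \<le> C_qg e"
proof -
  obtain y where "y \<in> cspan e" "norm y = 1" using exists_unit[OF assms(1)] by blast
  thus ?thesis using Cqg_bound1[OF assms(2), of y 1] norm_ge_zero order_trans by blast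
qed

lemma Cuqg_nonneg:
  assumes "semi_normalized e" "uniformly_quasi_greedy e" shows "0 \<le> C_uqg e"
proof -
  obtain y where "y \<in> cspan e" "norm y = 1" using exists_unit[OF assms(1)] by blast
  thus ?thesis using Cuqg_bound[OF assms(2), of y 1] norm_ge_zero order_trans by blast
qed

section \<open>Abel summation\<close>

lemma abel_aux:
  fixes d :: "nat \<Rightarrow> 'a::real_normed_vector" and lam :: "nat \<Rightarrow> real"
  assumes mono: "\<And>j. Suc j < N \<Longrightarrow> lam j \<le> lam (Suc j)"
    and G: "\<And>J. 1 \<le> J \<Longrightarrow> J \<le> N \<Longrightarrow> norm (\<Sum>j<J. d j) \<le> G"
  shows "1 \<le> n \<Longrightarrow> n \<le> N \<Longrightarrow>
    norm ((\<Sum>j<n. lam j *\<^sub>R d j) - lam (n - 1) *\<^sub>R (\<Sum>j<n. d j)) \<le> (lam (n - 1) - lam 0) * G"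
proof (induction n)
  case 0 thus ?case by simp
next
  case (Suc n)
  show ?case
  proof (cases "n = 0")
    case True thus ?thesis by simp
  next
    case False
    hence n1: "1 \<le> n" "n \<le> N" using Suc by auto
    have IH: "norm ((\<Sum>j<n. lam j *\<^sub>R d j) - lam (n - 1) *\<^sub>R (\<Sum>j<n. d j)) \<le> (lam (n - 1) - lam 0) * G"
      using Suc.IH n1 by simp
    have m: "lam (n - 1) \<le> lam n" using mono[of "n - 1"] Suc.prems n1 by simp
    have gn: "norm (\<Sum>j<n. d j) \<le> G" using G n1 by simp
    have eq: "(\<Sum>j<Suc n. lam j *\<^sub>R d j) - lam (Suc n - 1) *\<^sub>R (\<Sum>j<Suc n. d j)
      = ((\<Sum>j<n. lam j *\<^sub>R d j) - lam (n - 1) *\<^sub>R (\<Sum>j<n. d j)) - (lam n - lam (n - 1)) *\<^sub>R (\<Sum>j<n. d j)"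
      by (simp add: algebra_simps)
    have "norm ((lam n - lam (n - 1)) *\<^sub>R (\<Sum>j<n. d j)) \<le> (lam n - lam (n - 1)) * G"
      using m gn by (simp add: mult_left_mono)
    hence "norm (((\<Sum>j<n. lam j *\<^sub>R d j) - lam (n - 1) *\<^sub>R (\<Sum>j<n. d j)) - (lam n - lam (n - 1)) *\<^sub>R (\<Sum>j<n. d j))
       \<le> (lam (n - 1) - lam 0) * G + (lam n - lam (n - 1)) * G"
      using IH norm_triangle_ineq4[of "(\<Sum>j<n. lam j *\<^sub>R d j) - lam (n - 1) *\<^sub>R (\<Sum>j<n. d j)" "(lam n - lam (n - 1)) *\<^sub>R (\<Sum>j<n. d j)"] by linarith
    thus ?thesis unfolding eq by (simp add: algebra_simps)
  qed
qed

lemma abel: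
  fixes d :: "nat \<Rightarrow> 'a::real_normed_vector" and lam :: "nat \<Rightarrow> real"
  assumes mono: "\<And>j. Suc j < N \<Longrightarrow> lam j \<le> lam (Suc j)"
    and G: "\<And>J. 1 \<le> J \<Longrightarrow> J \<le> N \<Longrightarrow> norm (\<Sum>j<J. d j) \<le> G"
    and l0: "0 \<le> lam 0" and lb: "\<And>j. j < N \<Longrightarrow> lam j \<le> Lam" and N: "1 \<le> N"
  shows "norm (\<Sum>j<N. lam j *\<^sub>R d j) \<le> 2 * Lam * G"
proof -
  have A: "norm ((\<Sum>j<N. lam j *\<^sub>R d j) - lam (N - 1) *\<^sub>R (\<Sum>j<N. d j)) \<le> (lam (N - 1) - lam 0) * G"
    using abel_aux[of N lam d G N, OF mono G N] by auto
  have gN: "norm (\<Sum>j<N. d j) \<le> G" using G N by simp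
  have G0: "0 \<le> G" using gN norm_ge_zero order_trans by blast
  have lN: "lam (N - 1) \<le> Lam" using lb N by simp
  have mono0: "j < N \<Longrightarrow> lam 0 \<le> lam j" for j
  proof (induction j)
    case 0 thus ?case by simp
  next
    case (Suc j)
    hence "lam 0 \<le> lam j" by simp
    moreover have "lam j \<le> lam (Suc j)" using mono Suc.prems by simp
    ultimately show ?case by linarith
  qed
  have lN0: "0 \<le> lam (N - 1)" using mono0[of "N - 1"] l0 N by simp
  have B: "norm (lam (N - 1) *\<^sub>R (\<Sum>j<N. d j)) \<le> lam (N - 1) * G"
    using gN lN0 by (simp add: mult_left_mono)
  have "norm (\<Sum>j<N. lam j *\<^sub>R d j) \<le> (lam (N - 1) - lam 0) * G + lam (N - 1) * G"
    using A B norm_triangle_sub[of "\<Sum>j<N. lam j *\<^sub>R d j" "lam (N - 1) *\<^sub>R (\<Sum>j<N. d j)"]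
    by linarith
  also have "\<dots> \<le> 2 * Lam * G"
  proof -
    have "(lam (N - 1) - lam 0) * G \<le> Lam * G" using lN l0 G0 by (intro mult_right_mono) auto
    moreover have "lam (N - 1) * G \<le> Lam * G" using lN G0 by (intro mult_right_mono) auto
    ultimately show ?thesis by linarith
  qed
  finally show ?thesis .
qed

lemma sum_distinct_list_nth:
  "distinct l \<Longrightarrow> sum f (set l) = (\<Sum>j<length l. f (l ! j))"
  by (simp add: sum_list_distinct_conv_sum_set[symmetric] sum_list_sum_nth atLeast0LessThan)

lemma B_bound:
  assumes bs: "basic_sequence e" and sn: "semi_normalized e" and uq: "uniformly_quasi_greedy e"
    and x: "x \<in> cspan e" and al: "0 < al"
  shows "al * norm (\<Sum>n\<in>{n. al \<le> \<bar>coef e n x\<bar>}. sgn (coef e n x) *\<^sub>R e n) \<le> 2 * C_qg e * norm x"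
proof -
  let ?a = "\<lambda>k. coef e k x"
  define B where "B = {n. al \<le> \<bar>coef e n x\<bar>}"
  have finB: "finite B" unfolding B_def by (rule coef_big_finite[OF bs sn x al])
  have cond: "\<forall>n\<in>B. \<forall>k. k \<notin> B \<longrightarrow> \<bar>?a k\<bar> < \<bar>?a n\<bar>" by (auto simp: B_def)
  define N where "N = card B"
  define l where "l = greedy_list ?a N"
  have setl: "set l = B" and dl: "distinct l" using greedy_list_S_set[OF finB cond] by (auto simp: l_def N_def)
  have P3: "\<forall>j<N. \<forall>k. k \<notin> set (take j l) \<longrightarrow> \<bar>?a k\<bar> \<le> \<bar>?a (l ! j)\<bar>"
    using greedy_list_S[OF finB cond, of N] by (auto simp: l_def N_def)
  have lenl: "length l = N" by (simp add: l_def)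
  have Cq: "0 \<le> C_qg e" by (rule Cqg_nonneg[OF sn uq])
  show ?thesis
  proof (cases "N = 0")
    case True
    hence "B = {}" using finB by (simp add: N_def)
    thus ?thesis using Cq by (simp add: B_def[symmetric])
  next
    case False
    hence N1: "1 \<le> N" by simp
    define d where "d j = ?a (l ! j) *\<^sub>R e (l ! j)" for j
    define lam where "lam j = al / \<bar>?a (l ! j)\<bar>" for j
    have inB: "al \<le> \<bar>?a (l ! j)\<bar>" if "j < N" for j
    proof -
      have "l ! j \<in> set l" using that lenl by simp
      thus ?thesis using setl by (simp add: B_def)
    qed
    have "al *\<^sub>R (\<Sum>n\<in>B. sgn (?a n) *\<^sub>R e n) = (\<Sum>n\<in>B. (al / \<bar>?a n\<bar>) *\<^sub>R (?a n *\<^sub>R e n))"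
    proof -
      have "\<And>n. n \<in> B \<Longrightarrow> al *\<^sub>R (sgn (?a n) *\<^sub>R e n) = (al / \<bar>?a n\<bar>) *\<^sub>R (?a n *\<^sub>R e n)"
      proof -
        fix n assume "n \<in> B"
        hence "?a n \<noteq> 0" using al by (auto simp: B_def)
        hence "al * sgn (?a n) = al / \<bar>?a n\<bar> * ?a n"
          by (cases "?a n > 0") (auto simp: field_simps)
        thus "al *\<^sub>R (sgn (?a n) *\<^sub>R e n) = (al / \<bar>?a n\<bar>) *\<^sub>R (?a n *\<^sub>R e n)" by simp
      qed
      thus ?thesis unfolding scaleR_sum_right by (rule sum.cong[OF refl])
    qed
    also have "\<dots> = (\<Sum>j<N. lam j *\<^sub>R d j)"
      unfolding setl[symmetric] using sum_distinct_list_nth[OF dl] lenl by (simp add: lam_def d_def)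
    finally have eq: "al *\<^sub>R (\<Sum>n\<in>B. sgn (?a n) *\<^sub>R e n) = (\<Sum>j<N. lam j *\<^sub>R d j)" .
    have mono: "lam j \<le> lam (Suc j)" if "Suc j < N" for j
    proof -
      have "l ! Suc j \<notin> set (take j l)"
      proof
        assume "l ! Suc j \<in> set (take j l)"
        then obtain i where "i < length (take j l)" "take j l ! i = l ! Suc j" by (auto simp: in_set_conv_nth)
        hence "i < j" "l ! i = l ! Suc j" by auto
        thus False using nth_eq_iff_index_eq[OF dl, of i "Suc j"] that lenl by auto
      qed
      hence "\<bar>?a (l ! Suc j)\<bar> \<le> \<bar>?a (l ! j)\<bar>" using P3 that by auto
      moreover have "al \<le> \<bar>?a (l ! Suc j)\<bar>" using inB that by simp
      ultimately show ?thesis unfolding lam_def using al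
        by (intro divide_left_mono) auto
    qed
    have G: "norm (\<Sum>j<J. d j) \<le> C_qg e * norm x" if "1 \<le> J" "J \<le> N" for J
    proof -
      have "(\<Sum>j<J. d j) = greedy_sum e J x"
        unfolding greedy_sum_list d_def l_def
      proof (intro sum.cong refl)
        fix j assume "j \<in> {..<J}"
        hence j: "j < J" "j < N" using that by auto
        show "?a (greedy_list ?a N ! j) *\<^sub>R e (greedy_list ?a N ! j) =
          ?a (greedy_list ?a J ! j) *\<^sub>R e (greedy_list ?a J ! j)"
          using greedy_list_nth[OF j(1), of ?a] greedy_list_nth[OF j(2), of ?a] by simp
      qed
      thus ?thesis using Cqg_bound[OF bs uq x that(1)] by simp
    qed
    have "norm (\<Sum>j<N. lam j *\<^sub>R d j) \<le> 2 * 1 * (C_qg e * norm x)"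
    proof (rule abel[of N lam d "C_qg e * norm x" 1, OF mono G _ _ N1])
      show "0 \<le> lam 0" using al by (simp add: lam_def)
      show "lam j \<le> 1" if "j < N" for j using inB[OF that] al by (simp add: lam_def)
    qed auto
    hence "norm (al *\<^sub>R (\<Sum>n\<in>B. sgn (?a n) *\<^sub>R e n)) \<le> 2 * C_qg e * norm x" unfolding eq by simp
    thus ?thesis using al by (simp add: B_def)
  qed
qed

lemma fin_in_cspan: "(\<Sum>k\<in>F. c k *\<^sub>R e k) \<in> cspan e"
proof -
  have "(\<Sum>k\<in>F. c k *\<^sub>R e k) \<in> span (range e)" by (intro span_sum span_mul) (auto intro: span_base)
  thus ?thesis using span_sub_cspan by blast
qed

lemma le_by_delta:
  fixes X Y K :: real
  assumes "0 \<le> K" "\<And>d. 0 < d \<Longrightarrow> X \<le> Y + d * K"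
  shows "X \<le> Y"
proof (rule field_le_epsilon)
  fix ep :: real assume ep: "0 < ep"
  have "X \<le> Y + (ep / (K + 1)) * K" using assms(1) ep by (intro assms(2)) auto
  moreover have "(ep / (K + 1)) * K \<le> ep" using assms(1) ep by (simp add: field_simps)
  ultimately show "X \<le> Y + ep" by linarith
qed

lemma sub_bound:
  assumes bs: "basic_sequence e" and sn: "semi_normalized e" and uq: "uniformly_quasi_greedy e"
    and fB: "finite B" and DB: "D \<subseteq> B" and s: "\<And>n. n \<in> B \<Longrightarrow> \<bar>s n\<bar> = 1"
  shows "norm (\<Sum>n\<in>D. s n *\<^sub>R e n) \<le> C_qg e * norm (\<Sum>n\<in>B. s n *\<^sub>R e n)"
proof (cases "D = {}")
  case True thus ?thesis using Cqg_nonneg[OF sn uq] by simp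
next
  case False
  have fD: "finite D" using fB DB finite_subset by blast
  let ?S = "\<Sum>n\<in>D. norm (e n)"
  show ?thesis
  proof (rule le_by_delta)
    show "0 \<le> C_qg e * ?S" using Cqg_nonneg[OF sn uq] by (simp add: sum_nonneg)
    fix d :: real assume d: "0 < d"
    define c where "c n = (if n \<in> B then s n * (if n \<in> D then 1 + d else 1) else 0)" for n
    define w where "w = (\<Sum>n\<in>B. c n *\<^sub>R e n)"
    have cw: "coef e k w = c k" for k unfolding w_def using coef_fin[OF bs fB, of k c] by (simp add: c_def)
    have cond: "\<forall>n\<in>D. \<forall>k. k \<notin> D \<longrightarrow> \<bar>coef e k w\<bar> < \<bar>coef e n w\<bar>"
      using DB d s by (auto simp: cw c_def abs_mult)
    have gl: "set (greedy_list (\<lambda>k. coef e k w) (card D)) = D"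
      "distinct (greedy_list (\<lambda>k. coef e k w) (card D))"
      using greedy_list_S_set[OF fD cond] by auto
    have "greedy_sum e (card D) w = (\<Sum>n\<in>D. c n *\<^sub>R e n)"
      using greedy_sum_set[OF gl(2)] gl(1) by (simp add: cw)
    also have "\<dots> = (1 + d) *\<^sub>R (\<Sum>n\<in>D. s n *\<^sub>R e n)"
      unfolding scaleR_sum_right using DB by (intro sum.cong refl) (auto simp: c_def)
    finally have gs: "greedy_sum e (card D) w = (1 + d) *\<^sub>R (\<Sum>n\<in>D. s n *\<^sub>R e n)" .
    have "1 \<le> card D" using False fD by (simp add: Suc_le_eq card_gt_0_iff)
    hence "norm (greedy_sum e (card D) w) \<le> C_qg e * norm w"
      using Cqg_bound[OF bs uq] w_def fin_in_cspan by blast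
    hence A: "(1 + d) * norm (\<Sum>n\<in>D. s n *\<^sub>R e n) \<le> C_qg e * norm w" using gs d by simp
    have "w = (\<Sum>n\<in>B. s n *\<^sub>R e n) + (\<Sum>n\<in>B. (if n \<in> D then d * s n else 0) *\<^sub>R e n)"
      unfolding w_def c_def sum.distrib[symmetric]
      by (intro sum.cong refl) (auto simp: algebra_simps)
    also have "(\<Sum>n\<in>B. (if n \<in> D then d * s n else 0) *\<^sub>R e n) = (\<Sum>n\<in>D. (d * s n) *\<^sub>R e n)"
      using fB DB by (intro sum.mono_neutral_cong_right) auto
    finally have weq: "w = (\<Sum>n\<in>B. s n *\<^sub>R e n) + (\<Sum>n\<in>D. (d * s n) *\<^sub>R e n)" .
    have "norm (\<Sum>n\<in>D. (d * s n) *\<^sub>R e n) \<le> (\<Sum>n\<in>D. norm ((d * s n) *\<^sub>R e n))" by (rule norm_sum)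
    also have "\<dots> = d * ?S" using DB s d by (simp add: sum_distrib_left abs_mult subset_iff)
    finally have "norm w \<le> norm (\<Sum>n\<in>B. s n *\<^sub>R e n) + d * ?S"
      unfolding weq using norm_triangle_ineq order_trans add_left_mono by blast
    hence "C_qg e * norm w \<le> C_qg e * (norm (\<Sum>n\<in>B. s n *\<^sub>R e n) + d * ?S)"
      using Cqg_nonneg[OF sn uq] by (intro mult_left_mono) auto
    moreover have "norm (\<Sum>n\<in>D. s n *\<^sub>R e n) \<le> (1 + d) * norm (\<Sum>n\<in>D. s n *\<^sub>R e n)"
      using d by (simp add: algebra_simps)
    ultimately show "norm (\<Sum>n\<in>D. s n *\<^sub>R e n) \<le> C_qg e * norm (\<Sum>n\<in>B. s n *\<^sub>R e n) + d * (C_qg e * ?S)"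
      using A by (simp add: algebra_simps)
  qed
qed

section \<open>Layer decomposition\<close>

lemma Sup_fin_labs_nonneg:
  assumes "finite I" "i \<in> I" shows "0 \<le> Sup_fin ((\<lambda>i. labs (f i :: 'a::banach_lattice)) ` I)"
proof -
  have "labs (f i) \<le> Sup_fin ((\<lambda>i. labs (f i)) ` I)" using assms by (intro Sup_fin.coboundedI) auto
  thus ?thesis using labs_nonneg order_trans by blast
qed

lemma layer:
  fixes g :: "nat \<Rightarrow> 'a::banach_lattice" and T :: "nat \<Rightarrow> nat set"
  assumes fI: "finite I" and neI: "I \<noteq> {}" and fA: "finite A" and neA: "A \<noteq> {}"
    and TA: "\<And>i. i \<in> I \<Longrightarrow> T i \<subseteq> A"
    and H: "\<And>D. D \<subseteq> A \<Longrightarrow> norm (Sup_fin ((\<lambda>i. labs (\<Sum>n\<in>T i \<inter> D. g n)) ` I)) \<le> K"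
  shows "(\<forall>n\<in>A. 0 \<le> c n) \<Longrightarrow>
    norm (Sup_fin ((\<lambda>i. labs (\<Sum>n\<in>T i. c n *\<^sub>R g n)) ` I)) \<le> Max (c ` A) * K"
proof (induction "card {n\<in>A. 0 < c n}" arbitrary: c rule: less_induct)
  case (less c)
  have K0: "0 \<le> K" using H[of "{}"] norm_ge_zero order_trans by blast
  have Mx0: "0 \<le> Max (c ` A)"
  proof -
    obtain a where a: "a \<in> A" using neA by auto
    have "c a \<le> Max (c ` A)" using fA a by simp
    moreover have "0 \<le> c a" using less.prems a by blast
    ultimately show ?thesis by linarith
  qed
  define P where "P = {n\<in>A. 0 < c n}"
  have fP: "finite P" using fA by (simp add: P_def)
  show ?case
  proof (cases "P = {}")
    case True
    hence c0: "\<And>n. n \<in> A \<Longrightarrow> c n = 0" using less.prems by (force simp: P_def)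
    have "(\<lambda>i. labs (\<Sum>n\<in>T i. c n *\<^sub>R g n)) ` I = {0}"
    proof -
      have "(\<Sum>n\<in>T i. c n *\<^sub>R g n) = 0" if "i \<in> I" for i
      proof (intro sum.neutral ballI)
        fix n assume "n \<in> T i"
        hence "n \<in> A" using TA that by blast
        thus "c n *\<^sub>R g n = 0" by (simp add: c0)
      qed
      thus ?thesis using neI by (auto simp: labs_def)
    qed
    thus ?thesis using Mx0 K0 by simp
  next
    case False
    define mu where "mu = Min (c ` P)"
    have muP: "mu \<in> c ` P" unfolding mu_def using fP False by (intro Min_in) auto
    then obtain n0 where n0: "n0 \<in> P" "c n0 = mu" by auto
    have mu0: "0 < mu" using n0 by (auto simp: P_def)
    have mule: "\<And>n. n \<in> P \<Longrightarrow> mu \<le> c n" unfolding mu_def using fP by auto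
    define c' where "c' n = (if n \<in> P then c n - mu else c n)" for n
    have c'0: "\<forall>n\<in>A. 0 \<le> c' n" using less.prems mule by (auto simp: c'_def)
    have sub: "{n\<in>A. 0 < c' n} \<subset> P"
    proof
      show "{n\<in>A. 0 < c' n} \<subseteq> P"
      proof
        fix n assume n: "n \<in> {n\<in>A. 0 < c' n}"
        show "n \<in> P"
        proof (rule ccontr)
          assume "n \<notin> P"
          hence "c' n = c n" by (simp add: c'_def)
          thus False using n \<open>n \<notin> P\<close> by (simp add: P_def)
        qed
      qed
      show "{n\<in>A. 0 < c' n} \<noteq> P" using n0 by (auto simp: c'_def)
    qed
    hence lt: "card {n\<in>A. 0 < c' n} < card {n\<in>A. 0 < c n}"
      using fP psubset_card_mono by (auto simp: P_def)
    have IH: "norm (Sup_fin ((\<lambda>i. labs (\<Sum>n\<in>T i. c' n *\<^sub>R g n)) ` I)) \<le> Max (c' ` A) * K"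
      using less.hyps[OF lt c'0] .
    let ?U = "Sup_fin ((\<lambda>i. labs (\<Sum>n\<in>T i \<inter> P. g n)) ` I)"
    let ?V = "Sup_fin ((\<lambda>i. labs (\<Sum>n\<in>T i. c' n *\<^sub>R g n)) ` I)"
    let ?W = "Sup_fin ((\<lambda>i. labs (\<Sum>n\<in>T i. c n *\<^sub>R g n)) ` I)"
    have split: "(\<Sum>n\<in>T i. c n *\<^sub>R g n) = mu *\<^sub>R (\<Sum>n\<in>T i \<inter> P. g n) + (\<Sum>n\<in>T i. c' n *\<^sub>R g n)"
      if "i \<in> I" for i
    proof -
      have fT: "finite (T i)" using TA[OF that] fA finite_subset by blast
      have "(\<Sum>n\<in>T i. c n *\<^sub>R g n) = (\<Sum>n\<in>T i. (if n \<in> P then mu else 0) *\<^sub>R g n + c' n *\<^sub>R g n)"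
        by (intro sum.cong refl) (auto simp: c'_def algebra_simps)
      also have "\<dots> = (\<Sum>n\<in>T i. (if n \<in> P then mu else 0) *\<^sub>R g n) + (\<Sum>n\<in>T i. c' n *\<^sub>R g n)"
        by (rule sum.distrib)
      also have "(\<Sum>n\<in>T i. (if n \<in> P then mu else 0) *\<^sub>R g n) = (\<Sum>n\<in>T i \<inter> P. mu *\<^sub>R g n)"
        using fT by (simp add: sum.inter_restrict if_distrib[of "\<lambda>t. t *\<^sub>R _"] cong: if_cong)
      also have "\<dots> = mu *\<^sub>R (\<Sum>n\<in>T i \<inter> P. g n)" by (simp add: scaleR_sum_right)
      finally show ?thesis .
    qed
    have WUV: "?W \<le> mu *\<^sub>R ?U + ?V"
    proof (rule Sup_fin.boundedI)
      show "finite ((\<lambda>i. labs (\<Sum>n\<in>T i. c n *\<^sub>R g n)) ` I)" using fI by simp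
      show "(\<lambda>i. labs (\<Sum>n\<in>T i. c n *\<^sub>R g n)) ` I \<noteq> {}" using neI by simp
      fix a assume "a \<in> (\<lambda>i. labs (\<Sum>n\<in>T i. c n *\<^sub>R g n)) ` I"
      then obtain i where i: "i \<in> I" "a = labs (\<Sum>n\<in>T i. c n *\<^sub>R g n)" by auto
      have "a \<le> labs (mu *\<^sub>R (\<Sum>n\<in>T i \<inter> P. g n)) + labs (\<Sum>n\<in>T i. c' n *\<^sub>R g n)"
        unfolding i(2) split[OF i(1)] by (rule labs_add)
      also have "\<dots> \<le> mu *\<^sub>R labs (\<Sum>n\<in>T i \<inter> P. g n) + labs (\<Sum>n\<in>T i. c' n *\<^sub>R g n)"
        using labs_scale_nonneg[of mu] mu0 by (intro add_right_mono) auto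
      also have "\<dots> \<le> mu *\<^sub>R ?U + ?V"
      proof (intro add_mono scaleR_left_mono)
        show "labs (\<Sum>n\<in>T i \<inter> P. g n) \<le> ?U" using fI i by (intro Sup_fin.coboundedI) auto
        show "labs (\<Sum>n\<in>T i. c' n *\<^sub>R g n) \<le> ?V" using fI i by (intro Sup_fin.coboundedI) auto
      qed (use mu0 in auto)
      finally show "a \<le> mu *\<^sub>R ?U + ?V" .
    qed
    obtain i0 where i0: "i0 \<in> I" using neI by auto
    have W0: "0 \<le> ?W" by (rule Sup_fin_labs_nonneg[OF fI i0])
    have "norm ?W \<le> norm (mu *\<^sub>R ?U + ?V)" by (rule norm_mono_lat[OF W0 WUV])
    also have "\<dots> \<le> mu * norm ?U + norm ?V" using mu0 norm_triangle_ineq[of "mu *\<^sub>R ?U" ?V] by simp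
    also have "\<dots> \<le> mu * K + Max (c' ` A) * K"
    proof -
      have "norm ?U \<le> K" using H[of P] by (simp add: P_def)
      hence "mu * norm ?U \<le> mu * K" using mu0 by (intro mult_left_mono) auto
      thus ?thesis using IH by linarith
    qed
    also have "\<dots> \<le> mu * K + (Max (c ` A) - mu) * K"
    proof -
      have "Max (c' ` A) \<le> Max (c ` A) - mu"
      proof (subst Max_le_iff)
        show "finite (c' ` A)" "c' ` A \<noteq> {}" using fA neA by auto
        show "\<forall>a\<in>c' ` A. a \<le> Max (c ` A) - mu"
        proof
          fix a assume "a \<in> c' ` A"
          then obtain n where n: "n \<in> A" "a = c' n" by auto
          have cn: "c n \<le> Max (c ` A)" using fA n(1) by auto
          have "n0 \<in> A" using n0 by (simp add: P_def)
          hence "c n0 \<le> Max (c ` A)" using fA by simp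
          hence "mu \<le> Max (c ` A)" using n0 by simp
          thus "a \<le> Max (c ` A) - mu" using n cn less.prems by (auto simp: c'_def P_def)
        qed
      qed
      thus ?thesis using K0 by (intro add_left_mono mult_right_mono)
    qed
    finally show ?thesis by (simp add: algebra_simps)
  qed
qed

lemma norm_labs_le: "norm (labs (v::'a::banach_lattice)) \<le> norm v"
proof -
  have h: "sup (labs v) (- labs v) = sup v (- v)"
    using labs_of_nonneg[OF labs_nonneg[of v]] unfolding labs_def .
  show ?thesis using lattice_norm[of "labs v" v] h by simp
qed

lemma labs_diff: "labs ((a::'a::banach_lattice) - b) \<le> labs a + labs b"
  using labs_add[of a "- b"] labs_minus[of b] by simp

lemma take_filter_prefix:
  "\<exists>J\<le>length (filter P xs). set (take i xs) \<inter> {n. P n} = set (take J (filter P xs))"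
proof -
  let ?F = "filter P (take i xs)"
  have "filter P xs = ?F @ filter P (drop i xs)"
    by (metis append_take_drop_id filter_append)
  hence "take (length ?F) (filter P xs) = ?F" by simp
  moreover have "length ?F \<le> length (filter P xs)"
    by (metis \<open>filter P xs = ?F @ filter P (drop i xs)\<close> le_add1 length_append)
  ultimately show ?thesis by (intro exI[of _ "length ?F"]) auto
qed

lemma core:
  fixes e :: "nat \<Rightarrow> 'a::banach_lattice"
  assumes bs: "basic_sequence e" and sn: "semi_normalized e" and uq: "uniformly_quasi_greedy e"
    and dns: "distinct ns" and nsne: "ns \<noteq> []" and DA: "D \<subseteq> set ns" and eps: "\<And>n. n \<in> D \<Longrightarrow> \<bar>ep n\<bar> = 1"
  shows "norm (Sup_fin ((\<lambda>i. labs (\<Sum>n\<in>set (take i ns) \<inter> D. ep n *\<^sub>R e n)) ` {1..length ns}))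
    \<le> C_uqg e * norm (\<Sum>n\<in>D. ep n *\<^sub>R e n)"
proof -
  have Cu: "0 \<le> C_uqg e" by (rule Cuqg_nonneg[OF sn uq])
  define I where "I = {1..length ns}"
  have fD: "finite D" using DA finite_subset by blast
  show ?thesis
  proof (cases "D = {}")
    case True
    have "(\<lambda>i. labs (\<Sum>n\<in>set (take i ns) \<inter> D. ep n *\<^sub>R e n)) ` {1..length ns} = {0}" if ns: "ns \<noteq> []"
    proof -
      have m: "1 \<in> {1..length ns}" using ns by (simp add: Suc_le_eq)
      have "(\<lambda>i. labs (\<Sum>n\<in>set (take i ns) \<inter> D. ep n *\<^sub>R e n)) = (\<lambda>i. 0)"
        using True by (simp add: labs_def)
      hence "(\<lambda>i. labs (\<Sum>n\<in>set (take i ns) \<inter> D. ep n *\<^sub>R e n)) ` {1..length ns} = (\<lambda>i. 0) ` {1..length ns}"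
        by (rule arg_cong)
      also have "\<dots> = {0}" using m by auto
      finally show ?thesis .
    qed
    thus ?thesis using Cu nsne by (auto simp: True)
  next
    case False
    define ds where "ds = filter (\<lambda>n. n \<in> D) ns"
    define L where "L = length ds"
    have sds: "set ds = D" using DA by (auto simp: ds_def)
    have dds: "distinct ds" using dns by (simp add: ds_def)
    have L1: "1 \<le> L" using False sds by (cases ds) (auto simp: L_def)
    have pref: "\<forall>i. \<exists>J\<le>L. set (take i ns) \<inter> D = set (take J ds)"
      using take_filter_prefix[of "\<lambda>n. n \<in> D" ns] by (simp add: ds_def L_def)
    let ?S = "\<Sum>n\<in>D. norm (e n)"
    let ?one = "\<Sum>n\<in>D. ep n *\<^sub>R e n"
    show ?thesis
    proof (rule le_by_delta[where K = "(C_uqg e + 1) * ?S"])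
      show "0 \<le> (C_uqg e + 1) * ?S" using Cu by (simp add: sum_nonneg)
      fix d :: real assume d: "0 < d"
      define pos where "pos n = (THE j. j < L \<and> ds ! j = n)" for n
      have posj: "pos (ds ! j) = j" if "j < L" for j
        unfolding pos_def
        using that dds nth_eq_iff_index_eq[OF dds] by (intro the_equality) (auto simp: L_def)
      define t where "t n = 1 + d / (real (pos n) + 1)" for n
      have t1: "1 \<le> t n" "t n - 1 \<le> d" for n
        using d by (auto simp: t_def field_simps)
      have tmono: "t (ds ! j') < t (ds ! j)" if "j < j'" "j' < L" for j j'
        using that d posj by (auto simp: t_def intro!: divide_strict_left_mono)
      define c where "c n = (if n \<in> D then ep n * t n else 0)" for n
      define z0 where "z0 = (\<Sum>n\<in>D. (ep n * t n) *\<^sub>R e n)"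
      have cz0: "coef e k z0 = c k" for k unfolding z0_def c_def using coef_fin[OF bs fD] by simp
      have z0sp: "z0 \<in> cspan e" unfolding z0_def by (rule fin_in_cspan)
      obtain n1 where n1: "n1 \<in> D" using False by auto
      have "coef e n1 z0 \<noteq> 0" using cz0 n1 eps[OF n1] t1[of n1] by (auto simp: c_def)
      hence z0ne: "z0 \<noteq> 0" using coef_zero[OF bs] by auto
      define tau where "tau = norm z0"
      have tau: "0 < tau" using z0ne by (simp add: tau_def)
      define z where "z = (1 / tau) *\<^sub>R z0"
      have zsp: "z \<in> cspan e" unfolding z_def by (rule cspan_scale[OF z0sp])
      have nz: "norm z = 1" using tau by (simp add: z_def tau_def)
      have cz: "coef e k z = c k / tau" for k
        unfolding z_def using coef_scale[OF bs z0sp] cz0 by simp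
      have absc: "\<bar>c (ds ! j)\<bar> = t (ds ! j)" if "j < L" for j
      proof -
        have "ds ! j \<in> D" using that sds by (auto simp: L_def)
        moreover have "\<bar>t (ds ! j)\<bar> = t (ds ! j)" using t1(1)[of "ds ! j"] by simp
        ultimately show ?thesis using eps by (simp add: c_def abs_mult)
      qed
      have gsJ: "greedy_sum e J z = (\<Sum>n\<in>set (take J ds). (c n / tau) *\<^sub>R e n)" if "J \<le> L" for J
      proof -
        let ?SJ = "set (take J ds)"
        have cardJ: "card ?SJ = J" using that dds distinct_card[of "take J ds"] by (simp add: L_def)
        have cond: "\<forall>n\<in>?SJ. \<forall>k. k \<notin> ?SJ \<longrightarrow> \<bar>coef e k z\<bar> < \<bar>coef e n z\<bar>"
        proof (intro ballI allI impI)
          fix n k assume n: "n \<in> ?SJ" and k: "k \<notin> ?SJ"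
          obtain j where j: "j < J" "n = ds ! j" using n that by (auto simp: in_set_conv_nth L_def)
          have jL: "j < L" using j that by simp
          have cn: "\<bar>coef e n z\<bar> = t n / tau" using absc[OF jL] j tau by (simp add: cz)
          show "\<bar>coef e k z\<bar> < \<bar>coef e n z\<bar>"
          proof (cases "k \<in> D")
            case False
            thus ?thesis using cn t1[of n] tau by (simp add: cz c_def)
          next
            case True
            then obtain j' where j': "j' < L" "k = ds ! j'" using sds by (auto simp: in_set_conv_nth L_def)
            have "\<not> j' < J"
            proof
              assume "j' < J"
              hence "k \<in> ?SJ" using j' that by (auto simp: in_set_conv_nth L_def intro!: exI[of _ j'])
              thus False using k by simp
            qed
            hence "j < j'" using j by simp
            hence "t k < t n" using tmono j j' by simp
            moreover have "\<bar>coef e k z\<bar> = t k / tau" using absc[OF j'(1)] j' tau by (simp add: cz)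
            ultimately show ?thesis using cn tau by (simp add: divide_strict_right_mono)
          qed
        qed
        have gl: "set (greedy_list (\<lambda>k. coef e k z) J) = ?SJ" "distinct (greedy_list (\<lambda>k. coef e k z) J)"
          using greedy_list_S_set[OF _ cond] cardJ by auto
        show ?thesis using greedy_sum_set[OF gl(2)] gl(1) by (simp add: cz)
      qed
      have gmL: "labs (greedy_sum e J z) \<le> greedy_max e L z" if "J \<le> L" for J
      proof (cases "J = 0")
        case True thus ?thesis using greedy_max_nonneg[OF L1] by (simp add: greedy_sum_def labs_def)
      next
        case False thus ?thesis using greedy_max_ge[of J L e z] that by simp
      qed
      define R0 where "R0 = tau *\<^sub>R greedy_max e L z + (\<Sum>n\<in>D. (t n - 1) *\<^sub>R labs (e n))"
      have bnd: "labs (\<Sum>n\<in>set (take i ns) \<inter> D. ep n *\<^sub>R e n) \<le> R0" for i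
      proof -
        obtain J where J: "J \<le> L" "set (take i ns) \<inter> D = set (take J ds)" using pref by blast
        let ?SJ = "set (take J ds)"
        have SJD: "?SJ \<subseteq> D" using J(2) by auto
        have eq: "(\<Sum>n\<in>?SJ. ep n *\<^sub>R e n) = tau *\<^sub>R greedy_sum e J z - (\<Sum>n\<in>?SJ. (ep n * (t n - 1)) *\<^sub>R e n)"
        proof -
          have "tau *\<^sub>R greedy_sum e J z = (\<Sum>n\<in>?SJ. (ep n * t n) *\<^sub>R e n)"
            unfolding gsJ[OF J(1)] scaleR_sum_right using SJD tau by (intro sum.cong refl) (auto simp: c_def)
          also have "\<dots> = (\<Sum>n\<in>?SJ. ep n *\<^sub>R e n) + (\<Sum>n\<in>?SJ. (ep n * (t n - 1)) *\<^sub>R e n)"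
            unfolding sum.distrib[symmetric] by (intro sum.cong refl) (simp add: algebra_simps)
          finally show ?thesis by simp
        qed
        have "labs (\<Sum>n\<in>?SJ. ep n *\<^sub>R e n) \<le> labs (tau *\<^sub>R greedy_sum e J z) + labs (\<Sum>n\<in>?SJ. (ep n * (t n - 1)) *\<^sub>R e n)"
          unfolding eq by (rule labs_diff)
        also have "\<dots> \<le> R0" unfolding R0_def
        proof (rule add_mono)
          have "labs (tau *\<^sub>R greedy_sum e J z) \<le> tau *\<^sub>R labs (greedy_sum e J z)"
            using tau by (intro labs_scale_nonneg) auto
          also have "\<dots> \<le> tau *\<^sub>R greedy_max e L z" using tau gmL[OF J(1)] by (intro scaleR_left_mono) auto
          finally show "labs (tau *\<^sub>R greedy_sum e J z) \<le> tau *\<^sub>R greedy_max e L z" .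
          have "labs (\<Sum>n\<in>?SJ. (ep n * (t n - 1)) *\<^sub>R e n) \<le> (\<Sum>n\<in>?SJ. labs ((ep n * (t n - 1)) *\<^sub>R e n))"
            by (rule labs_sum) simp
          also have "\<dots> \<le> (\<Sum>n\<in>?SJ. (t n - 1) *\<^sub>R labs (e n))"
          proof (rule sum_mono)
            fix n assume "n \<in> ?SJ"
            hence "\<bar>ep n * (t n - 1)\<bar> = t n - 1" using SJD eps t1[of n] by (auto simp: abs_mult)
            thus "labs ((ep n * (t n - 1)) *\<^sub>R e n) \<le> (t n - 1) *\<^sub>R labs (e n)"
              using labs_scale[of "ep n * (t n - 1)" "e n"] by simp
          qed
          also have "\<dots> \<le> (\<Sum>n\<in>D. (t n - 1) *\<^sub>R labs (e n))"
          proof (rule sum_mono_subset_lat[OF fD SJD])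
            fix n
            have "(t n - 1) *\<^sub>R 0 \<le> (t n - 1) *\<^sub>R labs (e n)"
              using t1[of n] labs_nonneg[of "e n"] by (intro scaleR_left_mono) auto
            thus "0 \<le> (t n - 1) *\<^sub>R labs (e n)" by simp
          qed
          finally show "labs (\<Sum>n\<in>?SJ. (ep n * (t n - 1)) *\<^sub>R e n) \<le> (\<Sum>n\<in>D. (t n - 1) *\<^sub>R labs (e n))" .
        qed
        finally show ?thesis using J(2) by simp
      qed
      have ns1: "ns \<noteq> []" using False DA by auto
      have supb: "Sup_fin ((\<lambda>i. labs (\<Sum>n\<in>set (take i ns) \<inter> D. ep n *\<^sub>R e n)) ` {1..length ns}) \<le> R0"
        using bnd ns1 by (intro Sup_fin.boundedI) (auto simp: Suc_le_eq)
      have sup0: "0 \<le> Sup_fin ((\<lambda>i. labs (\<Sum>n\<in>set (take i ns) \<inter> D. ep n *\<^sub>R e n)) ` {1..length ns})"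
        using ns1 by (intro Sup_fin_labs_nonneg[of _ 1]) (auto simp: Suc_le_eq)
      have "norm (Sup_fin ((\<lambda>i. labs (\<Sum>n\<in>set (take i ns) \<inter> D. ep n *\<^sub>R e n)) ` {1..length ns})) \<le> norm R0"
        by (rule norm_mono_lat[OF sup0 supb])
      also have "\<dots> \<le> tau * norm (greedy_max e L z) + (\<Sum>n\<in>D. (t n - 1) * norm (e n))"
      proof -
        have "norm (\<Sum>n\<in>D. (t n - 1) *\<^sub>R labs (e n)) \<le> (\<Sum>n\<in>D. norm ((t n - 1) *\<^sub>R labs (e n)))"
          by (rule norm_sum)
        also have "\<dots> \<le> (\<Sum>n\<in>D. (t n - 1) * norm (e n))"
        proof (rule sum_mono)
          fix n
          have "(t n - 1) * norm (labs (e n)) \<le> (t n - 1) * norm (e n)"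
            using t1(1)[of n] norm_labs_le[of "e n"] by (intro mult_left_mono) auto
          thus "norm ((t n - 1) *\<^sub>R labs (e n)) \<le> (t n - 1) * norm (e n)" using t1(1)[of n] by simp
        qed
        finally show ?thesis unfolding R0_def using tau norm_triangle_ineq[of "tau *\<^sub>R greedy_max e L z"]
          by (smt (verit) norm_scaleR)
      qed
      also have "\<dots> \<le> tau * C_uqg e + d * ?S"
      proof -
        have "tau * norm (greedy_max e L z) \<le> tau * C_uqg e"
          using Cuqg_bound[OF uq zsp nz L1] tau by (intro mult_left_mono) auto
        moreover have "(\<Sum>n\<in>D. (t n - 1) * norm (e n)) \<le> (\<Sum>n\<in>D. d * norm (e n))"
          using t1 by (intro sum_mono mult_right_mono) auto
        ultimately show ?thesis by (simp add: sum_distrib_left)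
      qed
      also have "\<dots> \<le> (norm ?one + d * ?S) * C_uqg e + d * ?S"
      proof -
        have "z0 = ?one + (\<Sum>n\<in>D. (ep n * (t n - 1)) *\<^sub>R e n)"
          unfolding z0_def sum.distrib[symmetric] by (intro sum.cong refl) (simp add: algebra_simps)
        hence "tau \<le> norm ?one + norm (\<Sum>n\<in>D. (ep n * (t n - 1)) *\<^sub>R e n)"
          unfolding tau_def using norm_triangle_ineq by metis
        also have "norm (\<Sum>n\<in>D. (ep n * (t n - 1)) *\<^sub>R e n) \<le> (\<Sum>n\<in>D. norm ((ep n * (t n - 1)) *\<^sub>R e n))"
          by (rule norm_sum)
        also have "\<dots> \<le> (\<Sum>n\<in>D. d * norm (e n))"
        proof (rule sum_mono)
          fix n assume "n \<in> D"
          hence "\<bar>ep n * (t n - 1)\<bar> \<le> d" using eps t1[of n] by (simp add: abs_mult)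
          thus "norm ((ep n * (t n - 1)) *\<^sub>R e n) \<le> d * norm (e n)" by (simp add: mult_right_mono)
        qed
        finally have "tau \<le> norm ?one + d * ?S" by (simp add: sum_distrib_left)
        thus ?thesis using Cu by (simp add: mult_right_mono)
      qed
      finally show "norm (Sup_fin ((\<lambda>i. labs (\<Sum>n\<in>set (take i ns) \<inter> D. ep n *\<^sub>R e n)) ` {1..length ns}))
        \<le> C_uqg e * norm ?one + d * ((C_uqg e + 1) * ?S)" by (simp add: algebra_simps)
    qed
  qed
qed

theorem corollary3p24:
  fixes e :: "nat \<Rightarrow> 'a::banach_lattice" and x :: 'a and ns :: "nat list"
  assumes "basic_sequence e" and "semi_normalized e" and "uniformly_quasi_greedy e"
    and "x \<in> cspan e"
    and "ns \<noteq> []" and "distinct ns" and "set ns \<subseteq> supp e x"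
  shows "norm (P_vee e ns x) \<le>
    8 * (C_qg e)\<^sup>2 * C_uqg e
      * (Max ((\<lambda>n. \<bar>coef e n x\<bar>) ` set ns) / Min ((\<lambda>n. \<bar>coef e n x\<bar>) ` set ns))
      * norm x"
proof -
  note bs = assms(1) and sn = assms(2) and uq = assms(3) and xs = assms(4)
    and nsne = assms(5) and dns = assms(6) and supp = assms(7)
  let ?a = "\<lambda>n. coef e n x"
  define A where "A = set ns"
  define al where "al = Min ((\<lambda>n. \<bar>?a n\<bar>) ` A)"
  define be where "be = Max ((\<lambda>n. \<bar>?a n\<bar>) ` A)"
  have fA: "finite A" and neA: "A \<noteq> {}" using nsne by (auto simp: A_def)
  have anz: "n \<in> A \<Longrightarrow> ?a n \<noteq> 0" for n using supp by (auto simp: A_def supp_def)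
  have al0: "0 < al"
  proof -
    have "al \<in> (\<lambda>n. \<bar>?a n\<bar>) ` A" unfolding al_def using fA neA by (intro Min_in) auto
    thus ?thesis using anz by auto
  qed
  have alle: "n \<in> A \<Longrightarrow> al \<le> \<bar>?a n\<bar>" for n unfolding al_def using fA by auto
  have Cq: "0 \<le> C_qg e" by (rule Cqg_nonneg[OF sn uq])
  have Cu: "0 \<le> C_uqg e" by (rule Cuqg_nonneg[OF sn uq])
  define B where "B = {n. al \<le> \<bar>?a n\<bar>}"
  have fB: "finite B" unfolding B_def by (rule coef_big_finite[OF bs sn xs al0])
  have Bb: "al * norm (\<Sum>n\<in>B. sgn (?a n) *\<^sub>R e n) \<le> 2 * C_qg e * norm x"
    unfolding B_def by (rule B_bound[OF bs sn uq xs al0])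
  define K where "K = C_uqg e * (C_qg e * (2 * C_qg e * norm x / al))"
  define I where "I = {1..length ns}"
  define T where "T i = set (take i ns)" for i
  define g where "g n = sgn (?a n) *\<^sub>R e n" for n
  have H: "norm (Sup_fin ((\<lambda>i. labs (\<Sum>n\<in>T i \<inter> D. g n)) ` I)) \<le> K" if DA: "D \<subseteq> A" for D
  proof -
    have eps: "\<bar>sgn (?a n)\<bar> = 1" if "n \<in> D" for n
    proof -
      have "?a n \<noteq> 0" using anz DA that by blast
      thus ?thesis by simp
    qed
    have "norm (Sup_fin ((\<lambda>i. labs (\<Sum>n\<in>T i \<inter> D. g n)) ` I)) \<le> C_uqg e * norm (\<Sum>n\<in>D. sgn (?a n) *\<^sub>R e n)"
    proof -
      have DA': "D \<subseteq> set ns" using DA by (simp add: A_def)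
      have eqv: "(\<lambda>i. labs (\<Sum>n\<in>T i \<inter> D. g n)) ` I
        = (\<lambda>i. labs (\<Sum>n\<in>set (take i ns) \<inter> D. sgn (?a n) *\<^sub>R e n)) ` {1..length ns}"
        unfolding T_def g_def I_def ..
      show ?thesis unfolding eqv by (rule core[OF bs sn uq dns nsne DA' eps])
    qed
    also have "\<dots> \<le> C_uqg e * (C_qg e * norm (\<Sum>n\<in>B. sgn (?a n) *\<^sub>R e n))"
    proof (intro mult_left_mono Cu)
      have DB: "D \<subseteq> B" using DA alle by (auto simp: B_def)
      have sB: "\<bar>sgn (?a n)\<bar> = 1" if "n \<in> B" for n
      proof -
        have "?a n \<noteq> 0" using al0 that by (auto simp: B_def)
        thus ?thesis by simp
      qed
      show "norm (\<Sum>n\<in>D. sgn (?a n) *\<^sub>R e n) \<le> C_qg e * norm (\<Sum>n\<in>B. sgn (?a n) *\<^sub>R e n)"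
        by (rule sub_bound[OF bs sn uq fB DB, of "\<lambda>n. sgn (?a n)", OF sB])
    qed
    also have "\<dots> \<le> K" unfolding K_def
    proof (intro mult_left_mono Cu Cq)
      show "norm (\<Sum>n\<in>B. sgn (?a n) *\<^sub>R e n) \<le> 2 * C_qg e * norm x / al"
        using Bb by (simp add: pos_le_divide_eq[OF al0] mult.commute)
    qed
    finally show ?thesis .
  qed
  have TA: "T i \<subseteq> A" for i by (auto simp: T_def A_def dest: in_set_takeD)
  have fI: "finite I" and neI: "I \<noteq> {}" using nsne by (auto simp: I_def Suc_le_eq)
  have L: "norm (Sup_fin ((\<lambda>i. labs (\<Sum>n\<in>T i. \<bar>?a n\<bar> *\<^sub>R g n)) ` I)) \<le> Max ((\<lambda>n. \<bar>?a n\<bar>) ` A) * K"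
    using layer[OF fI neI fA neA TA H, of "\<lambda>n. \<bar>?a n\<bar>"] by auto
  have Peq: "P_vee e ns x = Sup_fin ((\<lambda>i. labs (\<Sum>n\<in>T i. \<bar>?a n\<bar> *\<^sub>R g n)) ` I)"
    unfolding P_vee_def I_def
  proof (intro arg_cong[where f = Sup_fin] image_cong refl arg_cong[where f = labs])
    fix i assume i: "i \<in> {1..length ns}"
    have "(\<Sum>n\<in>T i. \<bar>?a n\<bar> *\<^sub>R g n) = (\<Sum>n\<in>set (take i ns). ?a n *\<^sub>R e n)"
      unfolding T_def g_def by (intro sum.cong refl) (simp add: abs_mult_sgn)
    also have "\<dots> = (\<Sum>k<length (take i ns). ?a (take i ns ! k) *\<^sub>R e (take i ns ! k))"
      using dns by (intro sum_distinct_list_nth) simp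
    also have "\<dots> = (\<Sum>k<i. ?a (ns ! k) *\<^sub>R e (ns ! k))"
      using i by (intro sum.cong) auto
    finally show "(\<Sum>k<i. ?a (ns ! k) *\<^sub>R e (ns ! k)) = (\<Sum>n\<in>T i. \<bar>?a n\<bar> *\<^sub>R g n)" by simp
  qed
  have be0: "0 \<le> be"
  proof -
    obtain n where n: "n \<in> A" using neA by auto
    have "\<bar>?a n\<bar> \<le> be" unfolding be_def using fA n by simp
    thus ?thesis by linarith
  qed
  have "norm (P_vee e ns x) \<le> be * K" using L Peq by (simp add: be_def)
  also have "be * K = 2 * ((C_qg e)\<^sup>2 * C_uqg e * (be / al) * norm x)"
    unfolding K_def using al0 by (simp add: field_simps power2_eq_square)
  also have "\<dots> \<le> 8 * ((C_qg e)\<^sup>2 * C_uqg e * (be / al) * norm x)"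
  proof -
    have "0 \<le> (C_qg e)\<^sup>2 * C_uqg e * (be / al) * norm x" using Cu be0 al0 by simp
    thus ?thesis by linarith
  qed
  finally show ?thesis by (simp add: be_def al_def A_def mult.assoc)
qed

end
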